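(* Let $X$ and $Y$ be two configurations of the same polygonal chain (open or closed), each bar of which carries a symmetric slender adornment with that bar as base, and suppose the configuration $Y$ of the base chain is an expansion of the configuration $X$. If the adornments attached to the bars of $X$ pairwise do not overlap, then the corresponding adornments attached to the bars of $Y$ also pairwise do not overlap.
   Context: An adornment is a compact simply connected region $S\subset\mathbb{R}^2$ together with a segment $[x,y]$, $x\ne y$, with endpoints on the boundary of $S$ and $[x,y]\subseteq S$ (the base); its boundary consists of two arcs from $x$ to $y$ (the sides). It is slender if, for a point $p$ moving along either side from $x$ to $y$, $\|p-x\|$ is nondecreasing and $\|p-y\|$ is nonincreasing; it is symmetric if invariant under reflection in the line through $x,y$. A polygonal chain consists of vertices $v_0,\dots,v_n$ and bars $[v_{i-1},v_i]$ (for a closed chain also a bar $[v_n,v_0]$); a configuration assigns positions to the vertices preserving bar lengths. An adornment attached to a bar is carried to another configuration by the rigid motion taking the bar to its new position. Points of the chain in two configurations correspond via these rigid motions of the bars. Configuration $Y$ is an expansion of configuration $X$ if for any two points $p,q$ of the chain in $X$, the corresponding points $p',q'$ in $Y$ satisfy $\|p'-q'\|\ge\|p-q\|$. Two adornments (on different bars) overlap if some point of one lies in the interior of the other; touching along boundaries is allowed. *)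

theory Defs
  imports "HOL-Analysis.Analysis"
begin

text \<open>The plane R^2 is modelled by the type complex.\<close>

definition adornment_sides :: "complex set \<Rightarrow> complex \<Rightarrow> complex \<Rightarrow> (real \<Rightarrow> complex) \<Rightarrow> (real \<Rightarrow> complex) \<Rightarrow> bool" where
  "adornment_sides S x y g1 g2 \<longleftrightarrow>
     arc g1 \<and> arc g2 \<and> pathstart g1 = x \<and> pathfinish g1 = y \<and>
     pathstart g2 = x \<and> pathfinish g2 = y \<and>
     frontier S = path_image g1 \<union> path_image g2"

definition adornment :: "complex set \<Rightarrow> complex \<Rightarrow> complex \<Rightarrow> bool" where
  "adornment S x y \<longleftrightarrow>
     compact S \<and> simply_connected S \<and> x \<noteq> y \<and>
     x \<in> frontier S \<and> y \<in> frontier S \<and> closed_segment x y \<subseteq> S \<and>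
     (\<exists>g1 g2. adornment_sides S x y g1 g2)"

definition slender_side :: "(real \<Rightarrow> complex) \<Rightarrow> complex \<Rightarrow> complex \<Rightarrow> bool" where
  "slender_side g x y \<longleftrightarrow>
     (\<forall>s t. 0 \<le> s \<and> s \<le> t \<and> t \<le> 1 \<longrightarrow>
        norm (g s - x) \<le> norm (g t - x) \<and> norm (g t - y) \<le> norm (g s - y))"

definition slender_adornment :: "complex set \<Rightarrow> complex \<Rightarrow> complex \<Rightarrow> bool" where
  "slender_adornment S x y \<longleftrightarrow> adornment S x y \<and>
     (\<forall>g1 g2. adornment_sides S x y g1 g2 \<longrightarrow> slender_side g1 x y \<and> slender_side g2 x y)"

definition reflect_line :: "complex \<Rightarrow> complex \<Rightarrow> complex \<Rightarrow> complex" where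
  "reflect_line x y z = x + (y - x) * cnj ((z - x) / (y - x))"

definition symmetric_adornment :: "complex set \<Rightarrow> complex \<Rightarrow> complex \<Rightarrow> bool" where
  "symmetric_adornment S x y \<longleftrightarrow> adornment S x y \<and> reflect_line x y ` S = S"

text \<open>Orientation preserving rigid motion taking the bar [a,b] to [a',b']
  (for |a'-b'| = |a-b| and a \<noteq> b).\<close>
definition bar_motion :: "complex \<Rightarrow> complex \<Rightarrow> complex \<Rightarrow> complex \<Rightarrow> complex \<Rightarrow> complex" where
  "bar_motion a b a' b' z = a' + (b' - a') / (b - a) * (z - a)"

text \<open>Chain with vertices v_0..v_n; bar k joins v_k and v_(k+1 mod n+1).
  Open chain: bars 0..n-1; closed chain: bars 0..n (bar n joins v_n and v_0).\<close>
definition chain_bars :: "bool \<Rightarrow> nat \<Rightarrow> nat set" where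
  "chain_bars is_closed n = (if is_closed then {..n} else {..<n})"

definition chain_next :: "nat \<Rightarrow> nat \<Rightarrow> nat" where
  "chain_next n k = Suc k mod Suc n"

definition carry :: "nat \<Rightarrow> (nat \<Rightarrow> complex) \<Rightarrow> (nat \<Rightarrow> complex) \<Rightarrow> nat \<Rightarrow> complex \<Rightarrow> complex" where
  "carry n X Y k = bar_motion (X k) (X (chain_next n k)) (Y k) (Y (chain_next n k))"

definition overlap :: "complex set \<Rightarrow> complex set \<Rightarrow> bool" where
  "overlap A B \<longleftrightarrow> A \<inter> interior B \<noteq> {} \<or> B \<inter> interior A \<noteq> {}"

end

theory Submission
  imports Defs "HOL-Complex_Analysis.Complex_Analysis"
begin

lemma upper_eq:
  fixes u z :: complex
  assumes "Im u \<ge> 0" "Im z \<ge> 0" "norm u = norm z" "norm (u - 1) = norm (z - 1)"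
  shows "u = z"
proof -
  have a: "Re u ^2 + Im u ^2 = Re z ^2 + Im z ^2" using assms(3) by (metis cmod_power2)
  have b: "(Re u - 1)^2 + Im u ^2 = (Re z - 1)^2 + Im z ^2" using assms(4) cmod_power2[of "u-1"] cmod_power2[of "z-1"] by simp
  from a b have r: "Re u = Re z" by (simp add: power2_eq_square algebra_simps)
  with a have "Im u ^2 = Im z ^2" by simp
  with assms(1,2) have "Im u = Im z" by (simp add: power2_eq_iff_nonneg)
  with r show ?thesis by (simp add: complex_eq_iff)
qed

lemma circlepath_cis: "circlepath z r = (\<lambda>t. z + r * cis (2 * pi * t))"
  unfolding circlepath cis_conv_exp by (simp add: mult.commute mult.left_commute)

lemma circ_eq:
  defines "P \<equiv> (\<lambda>u::real. 1/2 + 1/2 * cis (pi * (1 - u)))"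
  shows "reversepath P +++ (cnj \<circ> P) = circlepath (1/2) (1/2)"
proof
  fix t :: real
  show "(reversepath P +++ (cnj \<circ> P)) t = circlepath (1/2) (1/2) t"
  proof (cases "t \<le> 1/2")
    case True
    have "pi * (1 - (1 - 2 * t)) = 2 * pi * t" by (simp add: algebra_simps)
    then show ?thesis using True by (simp add: joinpaths_def reversepath_def P_def circlepath_cis mult.assoc mult.left_commute)
  next
    case False
    have "cis (- (pi * (1 - (2 * t - 1)))) = cis (2 * pi * t - 2 * pi)" by (simp add: algebra_simps)
    also have "\<dots> = cis (2 * pi * t)" by (simp flip: cis_divide)
    finally have e: "cis (- (pi * (1 - (2 * t - 1)))) = cis (2 * pi * t)" .
    have "(reversepath P +++ (cnj \<circ> P)) t = cnj (P (2 * t - 1))" using False by (simp add: joinpaths_def)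
    also have "\<dots> = 1/2 + 1/2 * cis (- (pi * (1 - (2 * t - 1))))" by (simp add: P_def cis_cnj)
    also have "\<dots> = circlepath (1/2) (1/2) t" unfolding e by (simp add: circlepath_cis)
    finally show ?thesis .
  qed
qed

lemma seg_lens:
  fixes z u :: complex
  assumes zi: "Im z > 0" and u: "u \<in> closed_segment (complex_of_real (Re z)) z"
  shows "Im u \<ge> 0 \<and> norm u \<le> norm z \<and> norm (u - 1) \<le> norm (z - 1)"
proof -
    obtain s where s: "0 \<le> s" "s \<le> 1" "u = (1 - s) *\<^sub>R complex_of_real (Re z) + s *\<^sub>R z"
      using u unfolding closed_segment_def by blast
    have Reu: "Re u = Re z" and Imu: "Im u = s * Im z" unfolding s(3) by (simp_all add: algebra_simps)
    have "s * Im z \<le> Im z" using s zi by (simp add: mult_left_le_one_le)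
    then have "Im u ^2 \<le> Im z ^2" unfolding Imu using s zi by (intro power_mono) auto
    moreover have "norm u ^2 = Re z ^2 + Im u ^2" "norm (u - 1) ^2 = (Re z - 1) ^2 + Im u ^2"
      using cmod_power2[of u] cmod_power2[of "u - 1"] Reu by simp_all
    moreover have "norm z ^2 = Re z ^2 + Im z ^2" "norm (z - 1) ^2 = (Re z - 1) ^2 + Im z ^2"
      using cmod_power2[of z] cmod_power2[of "z - 1"] by simp_all
    ultimately have "norm u ^2 \<le> norm z ^2" "norm (u - 1) ^2 \<le> norm (z - 1) ^2"
      by linarith+
    then have "norm u \<le> norm z" "norm (u - 1) \<le> norm (z - 1)"
      using power2_le_imp_le norm_ge_zero by blast+
    moreover have "Im u \<ge> 0" using Imu s zi by simp
    ultimately show ?thesis by simp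
qed

lemma lens_norm_aux:
  fixes S :: "complex set" and g :: "real \<Rightarrow> complex"
  assumes sc: "simply_connected S" and sym: "\<And>u. u \<in> S \<Longrightarrow> cnj u \<in> S"
   and pg: "path g" "g 0 = 0" "g 1 = 1" and gS: "\<And>t. t \<in> {0..1} \<Longrightarrow> g t \<in> S"
   and sl: "\<And>s t. 0 \<le> s \<Longrightarrow> s \<le> t \<Longrightarrow> t \<le> 1 \<Longrightarrow> norm (g s) \<le> norm (g t) \<and> norm (g t - 1) \<le> norm (g s - 1)"
   and t0: "0 \<le> t0" "t0 \<le> 1" and zr: "norm z \<le> norm (g t0)" "norm (z - 1) \<le> norm (g t0 - 1)"
   and zS: "z \<notin> S" and zi: "Im z > 0"
  shows False
proof -
  define U where "U = (\<lambda>t. complex_of_real (Re (g t)) + \<i> * complex_of_real \<bar>Im (g t)\<bar>)"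
  have ReU: "Re (U t) = Re (g t)" and ImU: "Im (U t) = \<bar>Im (g t)\<bar>" for t by (simp_all add: U_def)
  have nU: "norm (U t) = norm (g t)" for t
    by (simp add: cmod_def ReU ImU)
  have nU1: "norm (U t - 1) = norm (g t - 1)" for t
    by (simp add: cmod_def ReU ImU)
  have US: "U t \<in> S" if "t \<in> {0..1}" for t
  proof (cases "Im (g t) \<ge> 0")
    case True
    then have "U t = g t" by (simp add: complex_eq_iff ReU ImU)
    then show ?thesis using gS that by simp
  next
    case False
    then have "U t = cnj (g t)" by (simp add: complex_eq_iff ReU ImU)
    then show ?thesis using gS sym that by simp
  qed
  have contU: "continuous_on {0..1} U"
    using pg(1) unfolding path_def U_def by (intro continuous_intros) auto
  have pU: "path U" using contU by (simp add: path_def)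
  have U0: "U 0 = 0" and U1: "U 1 = 1" using pg by (simp_all add: U_def complex_eq_iff)
  have contn: "continuous_on {0..1} (\<lambda>t. norm (U t))" "continuous_on {0..1} (\<lambda>t. norm (U t - 1))"
    using contU by (auto intro!: continuous_intros)
  have key: "norm (U t) > norm z \<or> norm (U t - 1) > norm (z - 1)" if t: "t \<in> {0..1}" for t
  proof (rule ccontr)
    assume "\<not> ?thesis"
    then have le: "norm (U t) \<le> norm z" "norm (U t - 1) \<le> norm (z - 1)" by auto
    have "\<exists>t'\<in>{0..1}. norm (U t') = norm z \<and> norm (U t' - 1) = norm (z - 1)"
    proof (cases "t \<le> t0")
      case True
      have s: "norm (U t' - 1) = norm (z - 1)" if "t \<le> t'" "t' \<le> t0" for t'
        using sl[of t t'] sl[of t' t0] that t t0 le zr by (simp add: nU nU1)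
      obtain t' where "t \<le> t'" "t' \<le> t0" "norm (U t') = norm z"
        using IVT'[of "\<lambda>t. norm (U t)" t "norm z" t0] le zr True t t0
          continuous_on_subset[OF contn(1), of "{t..t0}"] by (auto simp: nU)
      then show ?thesis using s t t0 by (intro bexI[of _ t']) auto
    next
      case False
      have s: "norm (U t') = norm z" if "t0 \<le> t'" "t' \<le> t" for t'
        using sl[of t0 t'] sl[of t' t] that t t0 le zr False by (simp add: nU nU1)
      obtain t' where "t0 \<le> t'" "t' \<le> t" "norm (U t' - 1) = norm (z - 1)"
        using IVT2'[of "\<lambda>t. norm (U t - 1)" t "norm (z - 1)" t0] le zr False t t0
          continuous_on_subset[OF contn(2), of "{t0..t}"] by (auto simp: nU1)
      then show ?thesis using s t t0 by (intro bexI[of _ t']) auto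
    qed
    then obtain t' where t': "t' \<in> {0..1}" "norm (U t') = norm z" "norm (U t' - 1) = norm (z - 1)" by blast
    then have "U t' = z" using upper_eq[of "U t'" z] zi by (simp add: ImU)
    then show False using US[OF t'(1)] zS by simp
  qed
  define a where "a = Re z"
  have z1: "norm (z - 1) < 1" using key[of 0] by (simp add: U0)
  have z2: "norm z < 1" using key[of 1] by (simp add: U1)
  have a0: "0 < a" and a1: "a < 1"
  proof -
    have "(Re z - 1)^2 + Im z ^2 < 1" using z1 cmod_power2[of "z - 1"]
      by (metis abs_norm_cancel minus_complex.simps(1) minus_complex.simps(2) norm_one one_complex.simps(1) one_complex.simps(2) power_strict_mono power_one zero_le_numeral diff_zero norm_ge_zero pos2)
    moreover have "(Re z - 1)^2 = Re z * Re z - 2 * Re z + 1" by (simp add: power2_eq_square algebra_simps)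
    moreover have "Re z \<le> 0 \<Longrightarrow> 0 \<le> Re z * Re z" by simp
    ultimately show "0 < a" unfolding a_def by (smt (verit) zero_le_power2)
    have "Re z ^2 + Im z ^2 < 1" using z2 cmod_power2[of z]
      by (metis norm_ge_zero power_one power_strict_mono pos2)
    then show "a < 1" unfolding a_def by (smt (verit) power2_less_imp_less zero_le_power2 one_power2)
  qed
  define \<gamma> where "\<gamma> = reversepath U +++ (cnj \<circ> U)"
  have pcU: "path (cnj \<circ> U)" using contU by (simp add: path_def continuous_on_compose continuous_on_cnj)
  have sU: "pathstart U = 0" "pathfinish U = 1" using U0 U1 by (simp_all add: pathstart_def pathfinish_def)
  have p\<gamma>: "path \<gamma>" unfolding \<gamma>_def using pU pcU sU by (simp add: pathstart_compose)
  have l\<gamma>: "pathfinish \<gamma> = pathstart \<gamma>" unfolding \<gamma>_def using sU by (simp add: pathfinish_compose)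
  have imU: "path_image U \<subseteq> S" using US by (auto simp: path_image_def)
  have imcU: "path_image (cnj \<circ> U) \<subseteq> S" using US sym by (auto simp: path_image_def)
  have im\<gamma>: "path_image \<gamma> = path_image U \<union> path_image (cnj \<circ> U)"
    unfolding \<gamma>_def using sU by (subst path_image_join) (auto simp: pathstart_compose)
  have wz: "winding_number \<gamma> z = 0"
    using simply_connected_imp_winding_number_zero[OF sc p\<gamma> _ l\<gamma> zS] im\<gamma> imU imcU by auto
  have notU: "u \<notin> path_image U" if "Im u \<ge> 0" "norm u \<le> norm z" "norm (u - 1) \<le> norm (z - 1)" for u
    using key that by (force simp: path_image_def)
  have notcU: "u \<notin> path_image (cnj \<circ> U)" if "Im u \<ge> 0" "norm u \<le> norm z" "norm (u - 1) \<le> norm (z - 1)" for u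
  proof
    assume "u \<in> path_image (cnj \<circ> U)"
    then obtain t where t: "t \<in> {0..1}" "u = cnj (U t)" by (auto simp: path_image_def)
    then have "Im (U t) = 0" using that(1) ImU[of t] by simp
    then have "U t = u" using t by (simp add: complex_eq_iff)
    then show False using notU[OF that] t by (auto simp: path_image_def)
  qed
  have inlens: "Im u \<ge> 0 \<and> norm u \<le> norm z \<and> norm (u - 1) \<le> norm (z - 1)" if "u \<in> closed_segment (complex_of_real a) z" for u
    using seg_lens[OF zi, of u] that unfolding a_def by blast
  have disj: "closed_segment (complex_of_real a) z \<inter> path_image \<gamma> = {}"
  proof (rule equals0I)
    fix u assume "u \<in> closed_segment (complex_of_real a) z \<inter> path_image \<gamma>"
    then have u1: "u \<in> closed_segment (complex_of_real a) z" and u2: "u \<in> path_image U \<union> path_image (cnj \<circ> U)"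
      using im\<gamma> by auto
    from inlens[OF u1] have "Im u \<ge> 0" "norm u \<le> norm z" "norm (u - 1) \<le> norm (z - 1)" by auto
    then show False using notU notcU u2 by blast
  qed
  have "winding_number \<gamma> constant_on closed_segment (complex_of_real a) z"
    by (rule winding_number_constant[OF p\<gamma> l\<gamma> connected_segment disj])
  then obtain c where c: "\<And>u. u \<in> closed_segment (complex_of_real a) z \<Longrightarrow> winding_number \<gamma> u = c"
    unfolding constant_on_def by blast
  have wa: "winding_number \<gamma> (complex_of_real a) = 0"
    using c[of "complex_of_real a"] c[of z] wz by simp
  define H where "H = {w. Im w \<ge> 0} - {complex_of_real a}"
  have stH: "starlike H"
    unfolding starlike_def
  proof (intro bexI ballI subsetI)
    show "complex_of_real a + \<i> \<in> H" by (simp add: H_def complex_eq_iff)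
    fix x u assume x: "x \<in> H" and u: "u \<in> closed_segment (complex_of_real a + \<i>) x"
    obtain s where s: "0 \<le> s" "s \<le> 1" "u = (1 - s) *\<^sub>R (complex_of_real a + \<i>) + s *\<^sub>R x"
      using u unfolding closed_segment_def by blast
    have Imx: "Im x \<ge> 0" "x \<noteq> complex_of_real a" using x by (auto simp: H_def)
    have Imu: "Im u = (1 - s) + s * Im x" using s by simp
    have "Im u \<ge> 0" using Imu s Imx by simp
    moreover have "u \<noteq> complex_of_real a"
    proof
      assume ua: "u = complex_of_real a"
      then have "(1 - s) + s * Im x = 0" using Imu by simp
      then have "s = 1" using s Imx by (smt (verit) mult_nonneg_nonneg)
      then show False using ua s Imx by simp
    qed
    ultimately show "u \<in> H" by (simp add: H_def)
  qed
  define P where "P = (\<lambda>u::real. 1/2 + 1/2 * cis (pi * (1 - u)))"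
  have pP: "path P" unfolding P_def path_def by (intro continuous_intros)
  have P0: "P 0 = 0" and P1: "P 1 = 1" by (simp_all add: P_def)
  have nP: "norm (P u - 1/2) = 1/2" for u by (simp add: P_def norm_mult)
  have aP: "norm (complex_of_real a - 1/2) < 1/2"
  proof -
    have "complex_of_real a - 1/2 = complex_of_real (a - 1/2)" by simp
    then have "norm (complex_of_real a - 1/2) = \<bar>a - 1/2\<bar>" by (simp only: norm_of_real)
    moreover have "\<bar>a - 1/2\<bar> < 1/2" using a0 a1 by arith
    ultimately show ?thesis by simp
  qed
  have imP: "path_image P \<subseteq> H"
  proof
    fix w assume "w \<in> path_image P"
    then obtain u where u: "u \<in> {0..1}" "w = P u" by (auto simp: path_image_def)
    have "Im w = 1/2 * sin (pi * (1 - u))" using u by (simp add: P_def)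
    moreover have "sin (pi * (1 - u)) \<ge> 0" using u by (intro sin_ge_zero) auto
    moreover have "w \<noteq> complex_of_real a" using nP[of u] aP u by auto
    ultimately show "w \<in> H" by (simp add: H_def)
  qed
  have imUH: "path_image U \<subseteq> H"
  proof
    fix w assume w: "w \<in> path_image U"
    have "Im w \<ge> 0" using w ImU by (auto simp: path_image_def)
    moreover have "w \<noteq> complex_of_real a" using w notU[of "complex_of_real a"] inlens[of "complex_of_real a"] by auto
    ultimately show "w \<in> H" by (simp add: H_def)
  qed
  have hUP: "homotopic_paths H U P"
    using stH[THEN starlike_imp_simply_connected] pU pP imP imUH U0 U1 P0 P1
    unfolding simply_connected_eq_homotopic_paths by (auto simp: pathstart_def pathfinish_def)
  have HA: "H \<subseteq> - {complex_of_real a}" by (auto simp: H_def)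
  have h1: "homotopic_paths (- {complex_of_real a}) (reversepath U) (reversepath P)"
    using homotopic_paths_subset[OF hUP HA] homotopic_paths_reversepath by blast
  have h2: "homotopic_paths (- {complex_of_real a}) (cnj \<circ> U) (cnj \<circ> P)"
  proof (rule homotopic_paths_continuous_image[OF hUP])
    show "continuous_on H cnj" by (intro continuous_intros)
    show "cnj \<in> H \<rightarrow> - {complex_of_real a}" by (auto simp: H_def complex_eq_iff)
  qed
  have "homotopic_paths (- {complex_of_real a}) \<gamma> (reversepath P +++ (cnj \<circ> P))"
    unfolding \<gamma>_def by (rule homotopic_paths_join[OF h1 h2]) (use sU in \<open>simp add: pathstart_compose\<close>)
  then have "winding_number \<gamma> (complex_of_real a) = winding_number (circlepath (1/2) (1/2)) (complex_of_real a)"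
    using circ_eq winding_number_homotopic_paths unfolding P_def by metis
  also have "\<dots> = 1" using aP by (intro winding_number_circlepath) (simp add: norm_minus_commute)
  finally show False using wa by simp
qed

lemma lens_norm:
  fixes S :: "complex set" and g :: "real \<Rightarrow> complex"
  assumes sc: "simply_connected S" and sym: "\<And>u. u \<in> S \<Longrightarrow> cnj u \<in> S"
   and seg: "\<And>s::real. 0 \<le> s \<Longrightarrow> s \<le> 1 \<Longrightarrow> complex_of_real s \<in> S"
   and pg: "path g" "g 0 = 0" "g 1 = 1" and gS: "\<And>t. t \<in> {0..1} \<Longrightarrow> g t \<in> S"
   and sl: "\<And>s t. 0 \<le> s \<Longrightarrow> s \<le> t \<Longrightarrow> t \<le> 1 \<Longrightarrow> norm (g s) \<le> norm (g t) \<and> norm (g t - 1) \<le> norm (g s - 1)"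
   and t0: "0 \<le> t0" "t0 \<le> 1" and zr: "norm z \<le> norm (g t0)" "norm (z - 1) \<le> norm (g t0 - 1)"
  shows "z \<in> S"
proof (rule ccontr)
  assume zS: "z \<notin> S"
  consider "Im z > 0" | "Im z = 0" | "Im z < 0" by linarith
  then show False
  proof cases
    case 1
    then show False using lens_norm_aux[OF sc sym pg gS sl t0 zr zS] by blast
  next
    case 2
    have z: "z = complex_of_real (Re z)" using 2 by (simp add: complex_eq_iff)
    have "norm (g t0) \<le> 1" using sl[of t0 1] t0 pg by simp
    then have a1: "\<bar>Re z\<bar> \<le> 1" using zr(1) z by (metis norm_of_real order_trans)
    have "norm (g t0 - 1) \<le> 1" using sl[of 0 t0] t0 pg by simp
    then have a2: "\<bar>Re z - 1\<bar> \<le> 1" using zr(2) z by (metis norm_of_real of_real_1 of_real_diff order_trans)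
    have "0 \<le> Re z" "Re z \<le> 1" using a1 a2 by arith+
    then have "z \<in> S" using seg z by metis
    then show False using zS by simp
  next
    case 3
    have "cnj z \<notin> S" using zS sym by fastforce
    moreover have "norm (cnj z) \<le> norm (g t0)" "norm (cnj z - 1) \<le> norm (g t0 - 1)"
    proof -
      have "cnj z - 1 = cnj (z - 1)" by simp
      then show "norm (cnj z) \<le> norm (g t0)" "norm (cnj z - 1) \<le> norm (g t0 - 1)"
        using zr by (simp_all only: complex_mod_cnj)
    qed
    moreover have "Im (cnj z) > 0" using 3 by simp
    ultimately show False using lens_norm_aux[OF sc sym pg gS sl t0] by blast
  qed
qed

lemma centroid_identity:
  fixes V :: "'s \<Rightarrow> 'a::real_inner" and u :: "'s \<Rightarrow> real"
  assumes fin: "finite T" and su: "sum u T = 1"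
  shows "(\<Sum>s\<in>T. \<Sum>s'\<in>T. u s * u s' * (norm (V s - V s'))\<^sup>2)
       = 2 * (\<Sum>s\<in>T. u s * (norm (V s - p))\<^sup>2) - 2 * (norm ((\<Sum>s\<in>T. u s *\<^sub>R V s) - p))\<^sup>2"
proof -
  define c where "c = (\<Sum>s\<in>T. u s *\<^sub>R V s)"
  have cc: "inner c c = (\<Sum>s\<in>T. \<Sum>s'\<in>T. u s * u s' * inner (V s) (V s'))"
    unfolding c_def by (simp add: inner_sum_left inner_sum_right sum_distrib_left mult.assoc inner_commute mult.left_commute)
  have cp: "inner c p = (\<Sum>s\<in>T. u s * inner (V s) p)"
    unfolding c_def by (simp add: inner_sum_left)
  have n: "(norm (x - y))\<^sup>2 = inner x x - 2 * inner x y + inner y y" for x y :: 'a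
    by (simp add: power2_norm_eq_inner inner_diff inner_commute)
  have "(\<Sum>s\<in>T. \<Sum>s'\<in>T. u s * u s' * (norm (V s - V s'))\<^sup>2)
      = (\<Sum>s\<in>T. \<Sum>s'\<in>T. u s * u s' * inner (V s) (V s))
        - 2 * (\<Sum>s\<in>T. \<Sum>s'\<in>T. u s * u s' * inner (V s) (V s'))
        + (\<Sum>s\<in>T. \<Sum>s'\<in>T. u s * u s' * inner (V s') (V s'))"
    by (simp add: n algebra_simps sum.distrib sum_subtractf sum_distrib_left)
  also have "(\<Sum>s\<in>T. \<Sum>s'\<in>T. u s * u s' * inner (V s) (V s)) = (\<Sum>s\<in>T. u s * inner (V s) (V s))"
    by (simp add: sum_distrib_left[symmetric] sum_distrib_right[symmetric] su mult.commute mult.left_commute)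
  also have "(\<Sum>s\<in>T. \<Sum>s'\<in>T. u s * u s' * inner (V s') (V s')) = (\<Sum>s\<in>T. u s * inner (V s) (V s))"
    by (simp add: sum_distrib_left[symmetric] sum_distrib_right[symmetric] su mult.assoc)
  finally have L: "(\<Sum>s\<in>T. \<Sum>s'\<in>T. u s * u s' * (norm (V s - V s'))\<^sup>2) = 2 * (\<Sum>s\<in>T. u s * inner (V s) (V s)) - 2 * inner c c"
    using cc by simp
  have "(\<Sum>s\<in>T. u s * (norm (V s - p))\<^sup>2) = (\<Sum>s\<in>T. u s * inner (V s) (V s)) - 2 * (\<Sum>s\<in>T. u s * inner (V s) p) + (\<Sum>s\<in>T. u s) * inner p p"
    by (simp add: n algebra_simps sum.distrib sum_subtractf sum_distrib_left sum_distrib_right)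
  then have R: "(\<Sum>s\<in>T. u s * (norm (V s - p))\<^sup>2) = (\<Sum>s\<in>T. u s * inner (V s) (V s)) - 2 * inner c p + inner p p"
    using su cp by simp
  have C: "(norm (c - p))\<^sup>2 = inner c c - 2 * inner c p + inner p p" by (rule n)
  show ?thesis unfolding c_def[symmetric] using L R C by linarith
qed

lemma continuous_on_Max_fin:
  fixes f :: "'i \<Rightarrow> 'a::topological_space \<Rightarrow> real"
  assumes "finite I" "I \<noteq> {}" "\<And>k. k \<in> I \<Longrightarrow> continuous_on C (f k)"
  shows "continuous_on C (\<lambda>q. Max ((\<lambda>k. f k q) ` I))"
  using assms
proof (induction I rule: finite_ne_induct)
  case (singleton x)
  then show ?case by simp
next
  case (insert x F)
  have "continuous_on C (\<lambda>q. max (f x q) (Max ((\<lambda>k. f k q) ` F)))"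
    using insert by (intro continuous_on_max) auto
  moreover have "Max ((\<lambda>k. f k q) ` insert x F) = max (f x q) (Max ((\<lambda>k. f k q) ` F))" for q
    using insert by (simp add: Max_insert)
  ultimately show ?case by simp
qed

lemma kirszbraun_finite:
  fixes P Q :: "'i \<Rightarrow> complex" and p :: complex
  assumes fin: "finite I" and ne: "I \<noteq> {}"
    and dP: "\<And>k l. k \<in> I \<Longrightarrow> l \<in> I \<Longrightarrow> dist (P k) (P l) \<le> dist (Q k) (Q l)"
  shows "\<exists>q. \<forall>k\<in>I. dist q (P k) \<le> dist p (Q k)"
proof -
  define f where "f k q = (dist q (P k))\<^sup>2 - (dist p (Q k))\<^sup>2" for k q
  define F where "F q = Max ((\<lambda>k. f k q) ` I)" for q
  define C where "C = convex hull (P ` I)"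
  have cC: "compact C" "convex C" "C \<noteq> {}"
    unfolding C_def using fin ne by (auto simp: compact_convex_hull convex_convex_hull finite_imp_compact)
  have contF: "continuous_on C F"
    unfolding F_def f_def using fin ne by (intro continuous_on_Max_fin continuous_intros) auto
  obtain q where qC: "q \<in> C" and qmin: "\<And>y. y \<in> C \<Longrightarrow> F q \<le> F y"
    using continuous_attains_inf[OF cC(1) cC(3) contF] by blast
  define m where "m = F q"
  have finf: "finite ((\<lambda>k. f k q) ` I)" "(\<lambda>k. f k q) ` I \<noteq> {}" using fin ne by auto
  have fle: "f k q \<le> m" if "k \<in> I" for k
    unfolding m_def F_def using finf that by (intro Max_ge) auto
  define A where "A = {k\<in>I. f k q = m}"
  have AI: "A \<subseteq> I" and finA: "finite A" using fin by (auto simp: A_def)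
  have Ane: "A \<noteq> {}"
  proof -
    have "m \<in> (\<lambda>k. f k q) ` I" unfolding m_def F_def using finf by (rule Max_in)
    then show ?thesis by (auto simp: A_def)
  qed
  have qA: "q \<in> convex hull (P ` A)"
  proof (rule ccontr)
    assume nq: "q \<notin> convex hull (P ` A)"
    define D where "D = convex hull (P ` A)"
    have D: "closed D" "convex D" "D \<noteq> {}"
      unfolding D_def using finA Ane by (auto simp: compact_convex_hull convex_convex_hull compact_imp_closed finite_imp_compact)
    define c where "c = closest_point D q"
    have cD: "c \<in> D" unfolding c_def using D by (intro closest_point_in_set) auto
    have cmin: "\<forall>z\<in>D. dist q c \<le> dist q z" unfolding c_def using D closest_point_le by blast
    define v where "v = c - q"
    have v0: "v \<noteq> 0" using cD nq unfolding v_def D_def by auto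
    have dot: "inner (q - c) (P k - c) \<le> 0" if "k \<in> A" for k
    proof -
      have "P k \<in> D" unfolding D_def using that by (intro hull_inc) auto
      then show ?thesis using any_closest_point_dot[OF D(2) D(1) cD _ cmin] by blast
    qed
    have act: "f k (q + t *\<^sub>R v) < m" if k: "k \<in> A" and t: "0 < t" "t < 2" for k t
    proof -
      have e: "(dist (q + t *\<^sub>R v) (P k))\<^sup>2 = (dist q (P k))\<^sup>2 + 2 * t * inner (q - P k) v + t\<^sup>2 * inner v v"
      proof -
        have s1: "q + t *\<^sub>R v - P k = (q - P k) + t *\<^sub>R v" by (simp add: algebra_simps)
        have "inner ((q - P k) + t *\<^sub>R v) ((q - P k) + t *\<^sub>R v) = inner (q - P k) (q - P k) + 2 * t * inner (q - P k) v + t\<^sup>2 * inner v v"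
          by (simp add: inner_add_left inner_add_right inner_commute power2_eq_square algebra_simps)
        then show ?thesis unfolding dist_norm s1 power2_norm_eq_inner .
      qed
      have "inner (q - P k) v = - inner v v + inner (P k - c) (q - c)"
        unfolding v_def by (simp add: inner_diff inner_commute algebra_simps)
      moreover have "inner (P k - c) (q - c) \<le> 0" using dot[OF k] by (simp add: inner_commute)
      ultimately have "inner (q - P k) v \<le> - inner v v" by simp
      moreover have vv: "inner v v > 0" using v0 by simp
      ultimately have h1: "2 * t * inner (q - P k) v \<le> 2 * t * (- inner v v)"
        using t by (intro mult_left_mono) auto
      have h2: "t * (t - 2) * inner v v = t\<^sup>2 * inner v v + 2 * t * (- inner v v)"
        by (simp add: power2_eq_square algebra_simps)
      from h1 h2 have "2 * t * inner (q - P k) v + t\<^sup>2 * inner v v \<le> t * (t - 2) * inner v v"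
        by linarith
      moreover have "t * (t - 2) < 0" using t by (simp add: mult_pos_neg)
      then have "t * (t - 2) * inner v v < 0" using vv by (simp add: mult_neg_pos)
      ultimately have "(dist (q + t *\<^sub>R v) (P k))\<^sup>2 < (dist q (P k))\<^sup>2" using e by linarith
      then show ?thesis using k unfolding A_def f_def by auto
    qed
    have inact: "\<forall>\<^sub>F t in at_right 0. f k (q + t *\<^sub>R v) < m" if k: "k \<in> I - A" for k
    proof -
      have lt: "f k q < m" using fle[of k] k by (auto simp: A_def)
      have "((\<lambda>t. f k (q + t *\<^sub>R v)) \<longlongrightarrow> f k (q + 0 *\<^sub>R v)) (at_right 0)"
        unfolding f_def by (intro tendsto_intros)
      then have "((\<lambda>t. f k (q + t *\<^sub>R v)) \<longlongrightarrow> f k q) (at_right 0)" by simp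
      from order_tendstoD(2)[OF this lt] show ?thesis .
    qed
    have "\<forall>\<^sub>F t in at_right 0. (\<forall>k\<in>I - A. f k (q + t *\<^sub>R v) < m) \<and> 0 < t \<and> t < 1"
    proof (intro eventually_conj)
      show "\<forall>\<^sub>F t in at_right 0. \<forall>k\<in>I - A. f k (q + t *\<^sub>R v) < m"
        using fin inact by (intro eventually_ball_finite) auto
      show "\<forall>\<^sub>F t in at_right (0::real). 0 < t" by (simp add: eventually_at_right_less)
      show "\<forall>\<^sub>F t in at_right (0::real). t < 1" using eventually_at_right_real[of 0 1] by (simp add: eventually_mono)
    qed
    then obtain t where t: "\<forall>k\<in>I - A. f k (q + t *\<^sub>R v) < m" "0 < t" "t < 1"
      using eventually_happens' trivial_limit_at_right_real by blast
    have all: "\<forall>k\<in>I. f k (q + t *\<^sub>R v) < m"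
    proof
      fix k assume "k \<in> I"
      show "f k (q + t *\<^sub>R v) < m"
      proof (cases "k \<in> A")
        case True
        then show ?thesis using act[of k t] t by simp
      next
        case False
        then show ?thesis using t(1) \<open>k \<in> I\<close> by blast
      qed
    qed
    have "F (q + t *\<^sub>R v) < m"
      unfolding F_def using fin ne all by (subst Max_less_iff) auto
    moreover have "q + t *\<^sub>R v \<in> C"
    proof -
      have "D \<subseteq> C" unfolding D_def C_def using AI by (intro hull_mono image_mono)
      then have "c \<in> C" using cD by auto
      have "q + t *\<^sub>R v = (1 - t) *\<^sub>R q + t *\<^sub>R c" unfolding v_def by (simp add: algebra_simps)
      then show ?thesis using cC(2) qC \<open>c \<in> C\<close> t convexD[of C q c "1 - t" t] by auto
    qed
    ultimately show False using qmin[of "q + t *\<^sub>R v"] m_def by simp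
  qed
  define T where "T = P ` A"
  have finT: "finite T" using finA by (simp add: T_def)
  obtain u where u0: "\<And>x. x \<in> T \<Longrightarrow> 0 \<le> u x" and su: "sum u T = 1" and uq: "(\<Sum>x\<in>T. u x *\<^sub>R x) = q"
    using qA convex_hull_finite[OF finT] unfolding T_def by auto
  define \<kappa> where "\<kappa> = inv_into A P"
  have \<kappa>A: "\<kappa> x \<in> A" and P\<kappa>: "P (\<kappa> x) = x" if "x \<in> T" for x
    using that unfolding T_def \<kappa>_def by (auto intro: inv_into_into f_inv_into_f)
  define r where "r x = dist p (Q (\<kappa> x))" for x
  have eqP: "(norm (x - q))\<^sup>2 = (r x)\<^sup>2 + m" if "x \<in> T" for x
  proof -
    have "f (\<kappa> x) q = m" using \<kappa>A[OF that] by (simp add: A_def)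
    then show ?thesis using P\<kappa>[OF that] unfolding f_def r_def by (simp add: dist_norm norm_minus_commute)
  qed
  have L1: "(\<Sum>x\<in>T. \<Sum>y\<in>T. u x * u y * (norm (x - y))\<^sup>2) = 2 * (\<Sum>x\<in>T. u x * (r x)\<^sup>2) + 2 * m"
  proof -
    have "(\<Sum>x\<in>T. \<Sum>y\<in>T. u x * u y * (norm (x - y))\<^sup>2) = 2 * (\<Sum>x\<in>T. u x * (norm (x - q))\<^sup>2) - 2 * (norm (q - q))\<^sup>2"
      using centroid_identity[OF finT su, of "\<lambda>x. x" q] uq by simp
    also have "(\<Sum>x\<in>T. u x * (norm (x - q))\<^sup>2) = (\<Sum>x\<in>T. u x * (r x)\<^sup>2) + m"
    proof -
      have "(\<Sum>x\<in>T. u x * (norm (x - q))\<^sup>2) = (\<Sum>x\<in>T. u x * (r x)\<^sup>2 + u x * m)"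
        using eqP by (intro sum.cong) (auto simp: algebra_simps)
      also have "\<dots> = (\<Sum>x\<in>T. u x * (r x)\<^sup>2) + m"
        by (simp add: sum.distrib sum_distrib_right[symmetric] su)
      finally show ?thesis .
    qed
    finally show ?thesis by simp
  qed
  have L2: "(\<Sum>x\<in>T. \<Sum>y\<in>T. u x * u y * (norm (Q (\<kappa> x) - Q (\<kappa> y)))\<^sup>2) \<le> 2 * (\<Sum>x\<in>T. u x * (r x)\<^sup>2)"
  proof -
    have "(\<Sum>x\<in>T. \<Sum>y\<in>T. u x * u y * (norm (Q (\<kappa> x) - Q (\<kappa> y)))\<^sup>2)
        = 2 * (\<Sum>x\<in>T. u x * (norm (Q (\<kappa> x) - p))\<^sup>2) - 2 * (norm ((\<Sum>x\<in>T. u x *\<^sub>R Q (\<kappa> x)) - p))\<^sup>2"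
      by (rule centroid_identity[OF finT su])
    also have "\<dots> \<le> 2 * (\<Sum>x\<in>T. u x * (norm (Q (\<kappa> x) - p))\<^sup>2)" by simp
    also have "(\<Sum>x\<in>T. u x * (norm (Q (\<kappa> x) - p))\<^sup>2) = (\<Sum>x\<in>T. u x * (r x)\<^sup>2)"
      unfolding r_def by (simp add: dist_norm norm_minus_commute)
    finally show ?thesis .
  qed
  have L12: "(\<Sum>x\<in>T. \<Sum>y\<in>T. u x * u y * (norm (x - y))\<^sup>2) \<le> (\<Sum>x\<in>T. \<Sum>y\<in>T. u x * u y * (norm (Q (\<kappa> x) - Q (\<kappa> y)))\<^sup>2)"
  proof (intro sum_mono mult_left_mono)
    fix x y assume x: "x \<in> T" and y: "y \<in> T"
    have "norm (x - y) = dist (P (\<kappa> x)) (P (\<kappa> y))" using P\<kappa> x y by (simp add: dist_norm)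
    also have "\<dots> \<le> dist (Q (\<kappa> x)) (Q (\<kappa> y))" using dP \<kappa>A AI x y by blast
    finally have "norm (x - y) \<le> norm (Q (\<kappa> x) - Q (\<kappa> y))" by (simp add: dist_norm)
    then show "(norm (x - y))\<^sup>2 \<le> (norm (Q (\<kappa> x) - Q (\<kappa> y)))\<^sup>2" by (intro power_mono) auto
    show "0 \<le> u x * u y" using u0 x y by simp
  qed
  have m0: "m \<le> 0" using L1 L2 L12 by linarith
  show ?thesis
  proof (intro exI ballI)
    fix k assume k: "k \<in> I"
    have "(dist q (P k))\<^sup>2 \<le> (dist p (Q k))\<^sup>2" using fle[OF k] m0 unfolding f_def by linarith
    then show "dist q (P k) \<le> dist p (Q k)" by (rule power2_le_imp_le) simp
  qed
qed

lemma dist_push_sq: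
  fixes p v a :: complex
  shows "(dist (p + t *\<^sub>R v) a)\<^sup>2 = (dist p a)\<^sup>2 + 2 * t * inner (p - a) v + t\<^sup>2 * inner v v"
proof -
  have s1: "p + t *\<^sub>R v - a = (p - a) + t *\<^sub>R v" by (simp add: algebra_simps)
  have "inner ((p - a) + t *\<^sub>R v) ((p - a) + t *\<^sub>R v) = inner (p - a) (p - a) + 2 * t * inner (p - a) v + t\<^sup>2 * inner v v"
    by (simp add: inner_add_left inner_add_right inner_commute power2_eq_square algebra_simps)
  then show ?thesis unfolding dist_norm s1 power2_norm_eq_inner .
qed

lemma push_out:
  fixes a b p :: complex
  assumes "a \<noteq> b"
  obtains v where "v \<noteq> 0" "\<And>t. t > 0 \<Longrightarrow> dist (p + t *\<^sub>R v) a > dist p a \<and> dist (p + t *\<^sub>R v) b > dist p b"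
proof -
  define v0 where "v0 = \<i> * (b - a)"
  define v where "v = (if inner (p - a) v0 \<ge> 0 then v0 else - v0)"
  have v0n: "v0 \<noteq> 0" using assms by (simp add: v0_def)
  have vn: "v \<noteq> 0" using v0n by (simp add: v_def)
  have i1: "inner (p - a) v \<ge> 0" by (simp add: v_def)
  have d0: "inner (b - a) v0 = 0" by (simp add: v0_def inner_complex_def algebra_simps)
  have d: "inner (b - a) v = 0" using d0 by (simp add: v_def)
  have i2: "inner (p - b) v = inner (p - a) v"
  proof -
    have "p - b = (p - a) - (b - a)" by simp
    then show ?thesis using d by (simp add: inner_diff_left)
  qed
  have vv: "inner v v > 0" using vn by simp
  show ?thesis
  proof (rule that[OF vn])
    fix t :: real assume t: "t > 0"
    have pos: "t\<^sup>2 * inner v v > 0" using t vv by simp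
    have "(dist (p + t *\<^sub>R v) a)\<^sup>2 > (dist p a)\<^sup>2"
      using dist_push_sq[of p t v a] i1 t pos by (smt (verit) mult_nonneg_nonneg)
    moreover have "(dist (p + t *\<^sub>R v) b)\<^sup>2 > (dist p b)\<^sup>2"
      using dist_push_sq[of p t v b] i1 i2 t pos by (smt (verit) mult_nonneg_nonneg)
    ultimately show "dist (p + t *\<^sub>R v) a > dist p a \<and> dist (p + t *\<^sub>R v) b > dist p b"
      by (meson power_less_imp_less_base zero_le_dist)
  qed
qed

lemma bar_motion_props:
  fixes a b a' b' u :: complex
  assumes ab: "a \<noteq> b" and d: "dist a' b' = dist a b"
  shows "dist (bar_motion a b a' b' u) a' = dist u a" "dist (bar_motion a b a' b' u) b' = dist u b"
    "bar_motion a b a' b' a = a'" "bar_motion a b a' b' b = b'"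
proof -
  define \<rho> where "\<rho> = (b' - a') / (b - a)"
  have n: "norm \<rho> = 1" using d ab by (simp add: \<rho>_def norm_divide dist_norm norm_minus_commute)
  have e1: "bar_motion a b a' b' u - a' = \<rho> * (u - a)" by (simp add: bar_motion_def \<rho>_def)
  have e2: "bar_motion a b a' b' u - b' = \<rho> * (u - b)"
  proof -
    have "\<rho> * (b - a) = b' - a'" using ab by (simp add: \<rho>_def)
    then show ?thesis by (simp add: bar_motion_def \<rho>_def[symmetric] algebra_simps)
  qed
  show "dist (bar_motion a b a' b' u) a' = dist u a" using e1 n by (simp add: dist_norm norm_mult)
  show "dist (bar_motion a b a' b' u) b' = dist u b" using e2 n by (simp add: dist_norm norm_mult)
  show "bar_motion a b a' b' a = a'" by (simp add: bar_motion_def)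
  show "bar_motion a b a' b' b = b'" using ab by (simp add: bar_motion_def)
qed

lemma lens_general:
  fixes S :: "complex set" and x y z :: complex and g :: "real \<Rightarrow> complex"
  assumes sc: "simply_connected S" and xy: "x \<noteq> y" and sym: "reflect_line x y ` S = S"
    and seg: "closed_segment x y \<subseteq> S"
    and pg: "path g" "g 0 = x" "g 1 = y" and gS: "\<And>t. t \<in> {0..1} \<Longrightarrow> g t \<in> S"
    and sl: "slender_side g x y"
    and t0: "0 \<le> t0" "t0 \<le> 1" and zr: "dist z x \<le> dist (g t0) x" "dist z y \<le> dist (g t0) y"
  shows "z \<in> S"
proof -
  define h where "h u = (u - x) / (y - x)" for u
  define k where "k w = x + (y - x) * w" for w
  have hk: "h (k w) = w" for w using xy by (simp add: h_def k_def)
  have kh: "k (h u) = u" for u using xy by (simp add: h_def k_def)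
  have nh: "norm (h u) = dist u x / dist y x" for u by (simp add: h_def norm_divide dist_norm)
  have nh1: "norm (h u - 1) = dist u y / dist y x" for u
  proof -
    have "h u - 1 = (u - y) / (y - x)" using xy by (simp add: h_def field_simps)
    then show ?thesis by (simp add: norm_divide dist_norm)
  qed
  have dpos: "dist y x > 0" using xy by simp
  define S' where "S' = h ` S"
  have contk: "continuous_on UNIV k" unfolding k_def by (intro continuous_intros)
  have conth: "continuous_on UNIV h" using xy unfolding h_def by (intro continuous_intros) auto
  have "S homeomorphic S'"
    unfolding homeomorphic_def homeomorphism_def S'_def
    by (rule exI[of _ h], rule exI[of _ k])
       (auto simp: hk kh image_iff intro: continuous_on_subset[OF conth] continuous_on_subset[OF contk])
  then have sc': "simply_connected S'" using sc homeomorphic_simply_connected by blast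
  have sym': "cnj u \<in> S'" if uS: "u \<in> S'" for u
  proof -
    obtain s where s: "s \<in> S" "u = h s" using uS unfolding S'_def by blast
    have "h (reflect_line x y s) = cnj (h s)" using xy by (simp add: reflect_line_def h_def)
    moreover have "reflect_line x y s \<in> S" using sym s(1) by blast
    ultimately show ?thesis using s by (metis S'_def image_eqI)
  qed
  have seg': "complex_of_real r \<in> S'" if "0 \<le> r" "r \<le> 1" for r
  proof -
    have "k (complex_of_real r) \<in> closed_segment x y"
      using that unfolding closed_segment_def k_def
      by (intro CollectI exI[of _ r]) (auto simp: scaleR_conv_of_real algebra_simps)
    then have "k (complex_of_real r) \<in> S" using seg by blast
    then show ?thesis unfolding S'_def using hk by (metis image_eqI)
  qed
  define g' where "g' = h \<circ> g"
  have pg': "path g'" "g' 0 = 0" "g' 1 = 1"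
  proof -
    show "path g'" unfolding g'_def path_def
      using pg(1) unfolding path_def by (intro continuous_on_compose continuous_on_subset[OF conth]) auto
    show "g' 0 = 0" "g' 1 = 1" using pg xy by (simp_all add: g'_def h_def)
  qed
  have gS': "g' t \<in> S'" if "t \<in> {0..1}" for t using gS[OF that] by (simp add: g'_def S'_def)
  have sl': "norm (g' s) \<le> norm (g' t) \<and> norm (g' t - 1) \<le> norm (g' s - 1)"
    if "0 \<le> s" "s \<le> t" "t \<le> 1" for s t
  proof -
    have "norm (g s - x) \<le> norm (g t - x) \<and> norm (g t - y) \<le> norm (g s - y)"
      using sl that unfolding slender_side_def by blast
    then show ?thesis unfolding g'_def o_def nh nh1 dist_norm using dpos
      by (simp add: divide_right_mono dist_norm)
  qed
  have zr': "norm (h z) \<le> norm (g' t0)" "norm (h z - 1) \<le> norm (g' t0 - 1)"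
    unfolding g'_def o_def nh nh1 using zr dpos by (simp_all add: divide_right_mono)
  have "h z \<in> S'" by (rule lens_norm[OF sc' sym' seg' pg' gS' sl' t0 zr'])
  then show ?thesis unfolding S'_def by (metis imageE kh)
qed

lemma adorn_lens:
  fixes S :: "complex set" and x y w z :: complex
  assumes sa: "slender_adornment S x y" and sy: "symmetric_adornment S x y"
    and wS: "w \<in> S" and zr: "dist z x \<le> dist w x" "dist z y \<le> dist w y"
  shows "z \<in> S"
proof -
  have ad: "adornment S x y" using sa by (simp add: slender_adornment_def)
  then have cS: "compact S" and sc: "simply_connected S" and xy: "x \<noteq> y"
    and seg: "closed_segment x y \<subseteq> S"
    unfolding adornment_def by auto
  obtain g1 g2 where sides: "adornment_sides S x y g1 g2" using ad unfolding adornment_def by blast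
  have sl: "slender_side g1 x y" "slender_side g2 x y" using sa sides by (auto simp: slender_adornment_def)
  have sym: "reflect_line x y ` S = S" using sy by (simp add: symmetric_adornment_def)
  have fr: "frontier S = path_image g1 \<union> path_image g2" and
    pg1: "path g1" "g1 0 = x" "g1 1 = y" and pg2: "path g2" "g2 0 = x" "g2 1 = y"
    using sides unfolding adornment_sides_def by (auto simp: arc_imp_path pathstart_def pathfinish_def)
  have frS: "frontier S \<subseteq> S" using cS by (simp add: compact_imp_closed frontier_subset_closed)
  obtain v where v0: "v \<noteq> 0" and vp: "\<And>t. t > 0 \<Longrightarrow> dist (w + t *\<^sub>R v) x > dist w x \<and> dist (w + t *\<^sub>R v) y > dist w y"
    using push_out[OF xy] by blast
  obtain B where B: "\<And>s. s \<in> S \<Longrightarrow> norm s \<le> B" using compact_imp_bounded[OF cS] bounded_iff by blast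
  define T where "T = (\<bar>B\<bar> + norm w + 1) / norm v"
  have Tpos: "T > 0" using v0 unfolding T_def by (intro divide_pos_pos) (auto intro: add_nonneg_pos)
  have "norm (w + T *\<^sub>R v) \<ge> T * norm v - norm w"
    using norm_triangle_ineq2[of "T *\<^sub>R v" "- w"] Tpos by (simp add: add.commute)
  moreover have "T * norm v = \<bar>B\<bar> + norm w + 1" using v0 by (simp add: T_def)
  ultimately have "norm (w + T *\<^sub>R v) > B" by linarith
  then have wT: "w + T *\<^sub>R v \<notin> S" using B by force
  have "closed_segment w (w + T *\<^sub>R v) \<inter> frontier S \<noteq> {}"
    by (rule connected_Int_frontier) (use wS wT in \<open>auto intro: ends_in_segment\<close>)
  then obtain f where fseg: "f \<in> closed_segment w (w + T *\<^sub>R v)" and ff: "f \<in> frontier S" by blast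
  obtain s where s: "0 \<le> s" "s \<le> 1" "f = (1 - s) *\<^sub>R w + s *\<^sub>R (w + T *\<^sub>R v)"
    using fseg unfolding closed_segment_def by blast
  have fe: "f = w + (s * T) *\<^sub>R v" using s(3) by (simp add: algebra_simps)
  have fd: "dist f x \<ge> dist w x \<and> dist f y \<ge> dist w y"
  proof (cases "s = 0")
    case True then show ?thesis using fe by simp
  next
    case False
    then have "s * T > 0" using s Tpos by simp
    then show ?thesis using vp[of "s * T"] fe by simp
  qed
  obtain g t0 where g: "g = g1 \<or> g = g2" and t0: "t0 \<in> {0..1}" and fg: "f = g t0"
  proof -
    have "f \<in> g1 ` {0..1} \<or> f \<in> g2 ` {0..1}" using ff fr by (simp add: path_image_def)
    then show ?thesis using that by blast
  qed
  have pg: "path g" "g 0 = x" "g 1 = y" and slg: "slender_side g x y" using g pg1 pg2 sl by auto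
  have gS: "g t \<in> S" if "t \<in> {0..1}" for t
    using g that fr frS by (auto simp: path_image_def)
  show ?thesis
    by (rule lens_general[OF sc xy sym seg pg gS slg, of t0]) (use t0 fg fd zr in auto)
qed

theorem mainTheorem6:
  fixes is_closed :: bool and n :: nat and X Y :: "nat \<Rightarrow> complex" and A :: "nat \<Rightarrow> complex set"
  assumes bar_lengths:
    "\<forall>k\<in>chain_bars is_closed n. dist (Y k) (Y (chain_next n k)) = dist (X k) (X (chain_next n k))"
  and adorned:
    "\<forall>k\<in>chain_bars is_closed n.
       slender_adornment (A k) (X k) (X (chain_next n k)) \<and>
       symmetric_adornment (A k) (X k) (X (chain_next n k))"
  and expansion:
    "\<forall>i\<in>chain_bars is_closed n. \<forall>j\<in>chain_bars is_closed n.
       \<forall>p\<in>closed_segment (X i) (X (chain_next n i)). \<forall>q\<in>closed_segment (X j) (X (chain_next n j)).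
         dist p q \<le> dist (carry n X Y i p) (carry n X Y j q)"
  and no_overlap_X:
    "\<forall>i\<in>chain_bars is_closed n. \<forall>j\<in>chain_bars is_closed n. i \<noteq> j \<longrightarrow> \<not> overlap (A i) (A j)"
  shows
    "\<forall>i\<in>chain_bars is_closed n. \<forall>j\<in>chain_bars is_closed n. i \<noteq> j \<longrightarrow>
       \<not> overlap (carry n X Y i ` A i) (carry n X Y j ` A j)"
proof -
  define B where "B = chain_bars is_closed n"
  define nx where "nx k = chain_next n k" for k
  define C where "C k = carry n X Y k" for k
  have xy: "X k \<noteq> X (nx k)" if "k \<in> B" for k
    using adorned that unfolding B_def nx_def slender_adornment_def adornment_def by blast
  have bl: "dist (Y k) (Y (nx k)) = dist (X k) (X (nx k))" if "k \<in> B" for k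
    using bar_lengths that unfolding B_def nx_def by blast
  have Cd: "dist (C k u) (Y k) = dist u (X k)" "dist (C k u) (Y (nx k)) = dist u (X (nx k))"
     "C k (X k) = Y k" "C k (X (nx k)) = Y (nx k)" if "k \<in> B" for k u
    unfolding C_def carry_def nx_def[symmetric] using bar_motion_props[OF xy[OF that] bl[OF that]] by auto
  have sa: "slender_adornment (A k) (X k) (X (nx k))" "symmetric_adornment (A k) (X k) (X (nx k))"
    if "k \<in> B" for k using adorned that unfolding B_def nx_def by auto
  have core: "C i ` A i \<inter> interior (C j ` A j) = {}" if i: "i \<in> B" and j: "j \<in> B" and ij: "i \<noteq> j" for i j
  proof (rule equals0I)
    fix p assume "p \<in> C i ` A i \<inter> interior (C j ` A j)"
    then have p1: "p \<in> C i ` A i" and p2: "p \<in> interior (C j ` A j)" by auto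
    obtain w where w: "w \<in> A i" "p = C i w" using p1 by blast
    obtain e where e: "e > 0" "ball p e \<subseteq> C j ` A j" using p2 mem_interior by blast
    have yj: "Y j \<noteq> Y (nx j)" using bl[OF j] xy[OF j] by auto
    obtain v where v0: "v \<noteq> 0" and vp: "\<And>t. t > 0 \<Longrightarrow> dist (p + t *\<^sub>R v) (Y j) > dist p (Y j) \<and> dist (p + t *\<^sub>R v) (Y (nx j)) > dist p (Y (nx j))"
      using push_out[OF yj] by blast
    define t where "t = e / (2 * norm v)"
    have tpos: "t > 0" using e v0 by (simp add: t_def)
    have "dist (p + t *\<^sub>R v) p = e / 2" using v0 e by (simp add: t_def dist_norm)
    then have "p + t *\<^sub>R v \<in> ball p e" using e by (simp add: dist_commute)
    then obtain w2 where w2: "w2 \<in> A j" "p + t *\<^sub>R v = C j w2" using e by blast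
    have lt: "dist p (Y j) < dist w2 (X j)" "dist p (Y (nx j)) < dist w2 (X (nx j))"
      using vp[OF tpos] w2(2) Cd(1,2)[OF j, of w2] by auto
    define bb where "bb k = (if k < (2::nat) then i else j)" for k
    define E where "E k = (if even k then X (bb k) else X (nx (bb k)))" for k
    define Qk where "Qk k = C (bb k) (E k)" for k
    have bbB: "bb k \<in> B" for k using i j by (simp add: bb_def)
    have Eseg: "E k \<in> closed_segment (X (bb k)) (X (nx (bb k)))" for k
      by (simp add: E_def)
    have dP: "dist (E k) (E l) \<le> dist (Qk k) (Qk l)" for k l
      using expansion bbB[of k] bbB[of l] Eseg[of k] Eseg[of l]
      unfolding Qk_def C_def B_def nx_def by blast
    obtain q where q: "\<forall>k\<in>{0,1,2,3::nat}. dist q (E k) \<le> dist p (Qk k)"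
      using kirszbraun_finite[of "{0,1,2,3::nat}" E Qk p] dP by auto
    have q0: "dist q (X i) \<le> dist p (Y i)" using q Cd[OF i] by (auto simp: E_def Qk_def bb_def)
    have q1: "dist q (X (nx i)) \<le> dist p (Y (nx i))" using q Cd[OF i] by (auto simp: E_def Qk_def bb_def)
    have q2: "dist q (X j) \<le> dist p (Y j)" using q Cd[OF j] by (auto simp: E_def Qk_def bb_def)
    have q3: "dist q (X (nx j)) \<le> dist p (Y (nx j))" using q Cd[OF j] by (auto simp: E_def Qk_def bb_def)
    have qAi: "q \<in> A i"
      by (rule adorn_lens[OF sa[OF i] w(1)]) (use q0 q1 w(2) Cd(1,2)[OF i, of w] in auto)
    define Ob where "Ob = ball (X j) (dist w2 (X j)) \<inter> ball (X (nx j)) (dist w2 (X (nx j)))"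
    have "Ob \<subseteq> A j"
    proof
      fix u assume "u \<in> Ob"
      then have "dist u (X j) < dist w2 (X j)" "dist u (X (nx j)) < dist w2 (X (nx j))"
        by (auto simp: Ob_def dist_commute)
      then show "u \<in> A j" by (intro adorn_lens[OF sa[OF j] w2(1)]) auto
    qed
    moreover have "open Ob" by (simp add: Ob_def open_Int)
    ultimately have "Ob \<subseteq> interior (A j)" by (rule interior_maximal)
    moreover have "q \<in> Ob" using q2 q3 lt by (auto simp: Ob_def dist_commute)
    ultimately have "q \<in> A i \<inter> interior (A j)" using qAi by auto
    then have "overlap (A i) (A j)" by (auto simp: overlap_def)
    then show False using no_overlap_X i j ij unfolding B_def by blast
  qed
  show ?thesis
    unfolding overlap_def
  proof (intro ballI impI)
    fix i j assume "i \<in> chain_bars is_closed n" "j \<in> chain_bars is_closed n" "i \<noteq> j"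
    then show "\<not> (carry n X Y i ` A i \<inter> interior (carry n X Y j ` A j) \<noteq> {} \<or>
                carry n X Y j ` A j \<inter> interior (carry n X Y i ` A i) \<noteq> {})"
      using core[of i j] core[of j i] unfolding B_def C_def by auto
  qed
qed

end
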